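(* Let $f:\mathbb{Z}^N\to\mathbb{R}\cup\{+\infty\}$ be an M-convex function with unique minimizer $x^*$, let $\hat{x}\in\mathbb{R}^N$, and let $x^\circ\in\arg\min\{\|x-\lfloor\hat{x}\rceil\|_1 : x\in\operatorname{dom} f\}$. Then $\|x^*-x^\circ\|_1\le 4\|\hat{x}-x^*\|_1$.
   Context: $N=\{1,\dots,n\}$, $e_i$ is the $i$th unit vector, $\operatorname{dom} f=\{x\in\mathbb{Z}^N: f(x)<+\infty\}$. A proper $f$ is M-convex if for all $x,y\in\operatorname{dom} f$ and every $i$ with $x_i>y_i$ there is $j$ with $x_j<y_j$ and $f(x)+f(y)\ge f(x-e_i+e_j)+f(y+e_i-e_j)$. $\lfloor\cdot\rceil$ is element-wise rounding to a closest integer. *)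

theory Defs
  imports "HOL-Library.Extended_Real"
begin

text \<open>Integer vectors in Z^N are functions from a finite index type 'n to int.
  Functions f : Z^N -> R \<union> {+\<infinity>} are modelled as maps into ereal that never take -\<infinity>.\<close>

definition dom_f :: "(('n \<Rightarrow> int) \<Rightarrow> ereal) \<Rightarrow> ('n \<Rightarrow> int) set" where
  "dom_f f = {x. f x < \<infinity>}"

definition unitv :: "'n \<Rightarrow> 'n \<Rightarrow> int" where
  "unitv i = (\<lambda>k. if k = i then 1 else 0)"

definition proper_fun :: "(('n \<Rightarrow> int) \<Rightarrow> ereal) \<Rightarrow> bool" where
  "proper_fun f \<longleftrightarrow> (\<forall>x. f x \<noteq> -\<infinity>) \<and> dom_f f \<noteq> {}"

definition M_convex :: "(('n \<Rightarrow> int) \<Rightarrow> ereal) \<Rightarrow> bool" where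
  "M_convex f \<longleftrightarrow> proper_fun f \<and>
     (\<forall>x\<in>dom_f f. \<forall>y\<in>dom_f f. \<forall>i. x i > y i \<longrightarrow>
        (\<exists>j. x j < y j \<and>
             f x + f y \<ge> f (\<lambda>k. x k - unitv i k + unitv j k) + f (\<lambda>k. y k + unitv i k - unitv j k)))"

definition l1_int :: "('n::finite \<Rightarrow> int) \<Rightarrow> int" where
  "l1_int x = (\<Sum>i\<in>UNIV. \<bar>x i\<bar>)"

definition l1_real :: "('n::finite \<Rightarrow> real) \<Rightarrow> real" where
  "l1_real x = (\<Sum>i\<in>UNIV. \<bar>x i\<bar>)"

definition is_rounding :: "('n \<Rightarrow> real) \<Rightarrow> ('n \<Rightarrow> int) \<Rightarrow> bool" where
  "is_rounding xhat r \<longleftrightarrow> (\<forall>i. \<forall>z::int. \<bar>xhat i - of_int (r i)\<bar> \<le> \<bar>xhat i - of_int z\<bar>)"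

end

theory Submission
  imports Defs
begin

theorem mainTheorem2:
  fixes f :: "('n::finite \<Rightarrow> int) \<Rightarrow> ereal"
    and xstar xcirc r :: "'n \<Rightarrow> int"
    and xhat :: "'n \<Rightarrow> real"
  assumes "M_convex f"
    and "xstar \<in> dom_f f"
    and "\<forall>y. f xstar \<le> f y"
    and "\<forall>y. f y = f xstar \<longrightarrow> y = xstar"
    and "is_rounding xhat r"
    and "xcirc \<in> dom_f f"
    and "\<forall>x\<in>dom_f f. l1_int (\<lambda>i. xcirc i - r i) \<le> l1_int (\<lambda>i. x i - r i)"
  shows "l1_int (\<lambda>i. xstar i - xcirc i) \<le> 4 * l1_real (\<lambda>i. xhat i - of_int (xstar i))"
proof -
  have m: "l1_int (\<lambda>i. xcirc i - r i) \<le> l1_int (\<lambda>i. xstar i - r i)"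
    using assms(2,7) by blast
  have t1: "l1_int (\<lambda>i. xstar i - xcirc i) \<le> l1_int (\<lambda>i. xstar i - r i) + l1_int (\<lambda>i. xcirc i - r i)"
    unfolding l1_int_def sum.distrib[symmetric] by (rule sum_mono) linarith
  have pc: "real_of_int \<bar>xstar i - r i\<bar> \<le> 2 * \<bar>xhat i - real_of_int (xstar i)\<bar>" for i
  proof -
    have "\<bar>xhat i - of_int (r i)\<bar> \<le> \<bar>xhat i - of_int (xstar i)\<bar>"
      using assms(5) unfolding is_rounding_def by blast
    then show ?thesis unfolding of_int_abs of_int_diff by (simp add: abs_le_iff abs_if split: if_splits; linarith)
  qed
  have "real_of_int (l1_int (\<lambda>i. xstar i - r i)) \<le> 2 * l1_real (\<lambda>i. xhat i - of_int (xstar i))"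
    unfolding l1_int_def l1_real_def of_int_sum sum_distrib_left by (rule sum_mono) (rule pc)
  moreover have "real_of_int (l1_int (\<lambda>i. xstar i - xcirc i)) \<le> real_of_int (l1_int (\<lambda>i. xstar i - r i)) + real_of_int (l1_int (\<lambda>i. xcirc i - r i))"
    using t1 by linarith
  moreover have "real_of_int (l1_int (\<lambda>i. xcirc i - r i)) \<le> real_of_int (l1_int (\<lambda>i. xstar i - r i))"
    using m by linarith
  ultimately show ?thesis by linarith
qed

end
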